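(* Consider the noisy Hegselmann–Krause model with heterogeneously prejudiced agents described in the context, with noise bound $\delta>0$, and suppose $J_1-J_2>\epsilon+2\,\frac{(1-\alpha)\epsilon+\delta}{\alpha}$. Then for every initial condition $x(0)\in[0,1]^n$, almost surely $$\limsup_{t\to\infty}\max_{i\in\mathcal{S}_1}|x_i(t)-J_1|\le\frac{\delta}{\alpha}\quad\text{and}\quad\limsup_{t\to\infty}\max_{i\in\mathcal{S}_2}|x_i(t)-J_2|\le\frac{\delta}{\alpha}.$$
   Context: Agents $\mathcal{V}=\{1,\dots,n\}$ with opinions $x_i(t)\in[0,1]$, $t=0,1,2,\dots$. $\mathcal{V}=\mathcal{S}_1\cup\mathcal{S}_2$ with $\mathcal{S}_1\cap\mathcal{S}_2=\emptyset$; agents in $\mathcal{S}_k$ have prejudice value $J_k\in[0,1]$ ($k=1,2$). Confidence bound $\epsilon\in(0,1)$, attraction strength $\alpha\in(0,1]$. Neighbor set $\mathcal{N}_i(x(t))=\{j\in\mathcal{V}:|x_j(t)-x_i(t)|\le\epsilon\}$. For $i\in\mathcal{S}_k$, $x_i^*(t)=(1-\alpha)|\mathcal{N}_i(x(t))|^{-1}\sum_{j\in\mathcal{N}_i(x(t))}x_j(t)+\alpha J_k+\xi_i(t+1)$, and $x_i(t+1)$ equals $1$ if $x_i^*(t)>1$, $x_i^*(t)$ if $x_i^*(t)\in[0,1]$, $0$ if $x_i^*(t)<0$. The noises $\{\xi_i(t)\}_{i\in\mathcal{V},t\ge1}$ are i.i.d. with $E\xi_1(1)=0$, $E\xi_1(1)^2>0$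 and $|\xi_1(1)|\le\delta$ almost surely. *)

theory Defs
  imports "HOL-Probability.Probability"
begin

definition clip01 :: "real \<Rightarrow> real" where
  "clip01 y = (if y > 1 then 1 else if y < 0 then 0 else y)"

definition hk_neighbors :: "nat set \<Rightarrow> real \<Rightarrow> (nat \<Rightarrow> real) \<Rightarrow> nat \<Rightarrow> nat set" where
  "hk_neighbors V eps x i = {j \<in> V. \<bar>x j - x i\<bar> \<le> eps}"

definition hk_avg :: "nat set \<Rightarrow> real \<Rightarrow> (nat \<Rightarrow> real) \<Rightarrow> nat \<Rightarrow> real" where
  "hk_avg V eps x i = (\<Sum>j\<in>hk_neighbors V eps x i. x j) / real (card (hk_neighbors V eps x i))"

text \<open>Trajectory: hk_traj V J eps alpha x0 xi t i = x_i(t), where J i is the prejudice of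
  agent i and xi i t is the noise xi_i(t) (used for t >= 1).\<close>
primrec hk_traj :: "nat set \<Rightarrow> (nat \<Rightarrow> real) \<Rightarrow> real \<Rightarrow> real \<Rightarrow> (nat \<Rightarrow> real)
    \<Rightarrow> (nat \<Rightarrow> nat \<Rightarrow> real) \<Rightarrow> nat \<Rightarrow> nat \<Rightarrow> real" where
  "hk_traj V J eps alpha x0 xi 0 = x0"
| "hk_traj V J eps alpha x0 xi (Suc t) =
     (\<lambda>i. clip01 ((1 - alpha) * hk_avg V eps (hk_traj V J eps alpha x0 xi t) i
                   + alpha * J i + xi i (Suc t)))"

end

theory Submission
  imports Defs
begin

lemma clip01_range: "clip01 y \<in> {0..1}"
  by (simp add: clip01_def)

lemma clip01_ge: "a \<le> 1 \<Longrightarrow> a \<le> y \<Longrightarrow> a \<le> clip01 y"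
  by (simp add: clip01_def)

lemma clip01_le: "0 \<le> a \<Longrightarrow> y \<le> a \<Longrightarrow> clip01 y \<le> a"
  by (simp add: clip01_def)

lemma clip01_dist: "0 \<le> J \<Longrightarrow> J \<le> 1 \<Longrightarrow> \<bar>clip01 y - J\<bar> \<le> \<bar>y - J\<bar>"
  by (simp add: clip01_def)

lemma self_in_nb: "i \<in> V \<Longrightarrow> 0 \<le> eps \<Longrightarrow> i \<in> hk_neighbors V eps x i"
  by (simp add: hk_neighbors_def)

lemma avg_bounds:
  assumes fin: "finite V" and iV: "i \<in> V" and e: "0 \<le> eps"
    and lo: "\<And>j. j \<in> hk_neighbors V eps x i \<Longrightarrow> a \<le> x j"
    and hi: "\<And>j. j \<in> hk_neighbors V eps x i \<Longrightarrow> x j \<le> b"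
  shows "a \<le> hk_avg V eps x i \<and> hk_avg V eps x i \<le> b"
proof -
  let ?N = "hk_neighbors V eps x i"
  have fN: "finite ?N" using fin by (simp add: hk_neighbors_def)
  have ne: "?N \<noteq> {}" using self_in_nb[OF iV e] by blast
  have cp: "real (card ?N) > 0" using fN ne by (simp add: card_gt_0_iff)
  have s1: "real (card ?N) * a \<le> (\<Sum>j\<in>?N. x j)"
    using sum_mono[of ?N "\<lambda>_. a" x] lo by simp
  have s2: "(\<Sum>j\<in>?N. x j) \<le> real (card ?N) * b"
    using sum_mono[of ?N x "\<lambda>_. b"] hi by simp
  show ?thesis unfolding hk_avg_def using s1 s2 cp
    by (simp add: divide_simps mult.commute)
qed

lemma avg_near:
  assumes fin: "finite V" and iV: "i \<in> V" and e: "0 \<le> eps"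
  shows "x i - eps \<le> hk_avg V eps x i \<and> hk_avg V eps x i \<le> x i + eps"
  by (rule avg_bounds[OF fin iV e]) (auto simp: hk_neighbors_def)

lemma phase2:
  fixes x :: "nat \<Rightarrow> nat \<Rightarrow> real"
  assumes fin: "finite V" and SV: "S \<subseteq> V" and Jk: "0 \<le> Jk" "Jk \<le> 1"
    and al: "0 < alpha" "alpha \<le> 1" and dl: "0 \<le> delta" and e: "0 \<le> eps"
    and rec: "\<And>t i. i \<in> S \<Longrightarrow> x (Suc t) i = clip01 ((1 - alpha) * hk_avg V eps (x t) i + alpha * Jk + ee i (Suc t))"
    and eb: "\<And>t i. i \<in> S \<Longrightarrow> \<bar>ee i (Suc t)\<bar> \<le> delta"
    and rng: "\<And>t j. j \<in> V \<Longrightarrow> x t j \<in> {0..1}"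
    and nb: "\<And>t i j. t \<ge> T \<Longrightarrow> i \<in> S \<Longrightarrow> j \<in> hk_neighbors V eps (x t) i \<Longrightarrow> j \<in> S"
  shows "\<forall>i\<in>S. \<bar>x (T + k) i - Jk\<bar> \<le> (1 - alpha) ^ k + delta / alpha"
proof (induction k)
  case 0
  have "0 \<le> delta / alpha" using dl al by simp
  show ?case
  proof
    fix i assume "i \<in> S"
    then have "x (T + 0) i \<in> {0..1}" using rng SV by blast
    then show "\<bar>x (T + 0) i - Jk\<bar> \<le> (1 - alpha) ^ 0 + delta / alpha"
      using Jk \<open>0 \<le> delta / alpha\<close> by (simp add: abs_le_iff)
  qed
next
  case (Suc k)
  let ?D = "(1 - alpha) ^ k + delta / alpha"
  show ?case
  proof
    fix i assume iS: "i \<in> S"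
    have iV: "i \<in> V" using iS SV by blast
    have "Jk - ?D \<le> hk_avg V eps (x (T + k)) i \<and> hk_avg V eps (x (T + k)) i \<le> Jk + ?D"
      apply (rule avg_bounds[OF fin iV e])
      using Suc.IH nb[of "T + k" i] iS by (force simp: abs_le_iff)+
    then have av: "\<bar>hk_avg V eps (x (T + k)) i - Jk\<bar> \<le> ?D" by (simp add: abs_le_iff)
    let ?y = "(1 - alpha) * hk_avg V eps (x (T + k)) i + alpha * Jk + ee i (Suc (T + k))"
    have "\<bar>x (T + Suc k) i - Jk\<bar> \<le> \<bar>?y - Jk\<bar>"
      using rec[OF iS, of "T + k"] clip01_dist[OF Jk] by simp
    also have "?y - Jk = (1 - alpha) * (hk_avg V eps (x (T + k)) i - Jk) + ee i (Suc (T + k))"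
      by (simp add: algebra_simps)
    also have "\<bar>\<dots>\<bar> \<le> (1 - alpha) * ?D + delta"
    proof -
      have "\<bar>(1 - alpha) * (hk_avg V eps (x (T + k)) i - Jk)\<bar> \<le> (1 - alpha) * ?D"
        using av al by (simp add: abs_mult mult_left_mono)
      then show ?thesis using eb[OF iS, of "T + k"] by linarith
    qed
    also have "\<dots> = (1 - alpha) ^ Suc k + delta / alpha"
      using al by (simp add: field_simps)
    finally show "\<bar>x (T + Suc k) i - Jk\<bar> \<le> (1 - alpha) ^ Suc k + delta / alpha" .
  qed
qed

lemma limsup_bound:
  fixes f :: "nat \<Rightarrow> nat \<Rightarrow> real"
  assumes al: "0 < alpha" "alpha \<le> 1"
    and b: "\<And>t i. t \<ge> T \<Longrightarrow> i \<in> S \<Longrightarrow> \<bar>f t i\<bar> \<le> (1 - alpha) ^ (t - T) + delta / alpha"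
  shows "limsup (\<lambda>t. SUP i\<in>S. ereal \<bar>f t i\<bar>) \<le> ereal (delta / alpha)"
proof -
  let ?D = "\<lambda>t. ereal ((1 - alpha) ^ (t - T) + delta / alpha)"
  have ev: "eventually (\<lambda>t. (SUP i\<in>S. ereal \<bar>f t i\<bar>) \<le> ?D t) sequentially"
    unfolding eventually_sequentially
  proof (intro exI allI impI)
    fix t assume "T \<le> t"
    then show "(SUP i\<in>S. ereal \<bar>f t i\<bar>) \<le> ?D t"
      using b by (intro SUP_least) simp
  qed
  have l0: "(\<lambda>t. (1 - alpha) ^ t) \<longlonglongrightarrow> 0"
    using al by (intro LIMSEQ_power_zero) simp
  have "(\<lambda>t. (1 - alpha) ^ (t - T)) \<longlonglongrightarrow> 0"
    using filterlim_compose[OF l0 filterlim_minus_const_nat_at_top[of T]] by (simp add: o_def)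
  then have "(\<lambda>t. (1 - alpha) ^ (t - T) + delta / alpha) \<longlonglongrightarrow> 0 + delta / alpha"
    by (intro tendsto_add) auto
  then have "?D \<longlonglongrightarrow> ereal (delta / alpha)" by (simp add: tendsto_ereal)
  then have "limsup ?D = ereal (delta / alpha)"
    by (intro lim_imp_Limsup) simp_all
  moreover have "limsup (\<lambda>t. SUP i\<in>S. ereal \<bar>f t i\<bar>) \<le> limsup ?D"
    by (rule Limsup_mono[OF ev])
  ultimately show ?thesis by simp
qed



lemma det:
  fixes V S1 S2 :: "nat set" and J1 J2 eps alpha delta :: real and x0 :: "nat \<Rightarrow> real"
    and ee :: "nat \<Rightarrow> nat \<Rightarrow> real"
  assumes fin: "finite V" and part: "S1 \<union> S2 = V" "S1 \<inter> S2 = {}"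
    and J: "J1 \<in> {0..1}" "J2 \<in> {0..1}"
    and eps: "0 < eps"
    and alpha: "0 < alpha" "alpha \<le> 1"
    and delta: "delta > 0"
    and gap: "J1 - J2 > eps + 2 * (((1 - alpha) * eps + delta) / alpha)"
    and init: "\<And>i. i \<in> V \<Longrightarrow> x0 i \<in> {0..1}"
    and eb: "\<And>i t. i \<in> V \<Longrightarrow> \<bar>ee i (Suc t)\<bar> \<le> delta"
  shows "limsup (\<lambda>t. SUP i\<in>S1. ereal \<bar>hk_traj V (\<lambda>i. if i \<in> S1 then J1 else J2) eps alpha x0 ee t i - J1\<bar>) \<le> ereal (delta / alpha)
   \<and> limsup (\<lambda>t. SUP i\<in>S2. ereal \<bar>hk_traj V (\<lambda>i. if i \<in> S1 then J1 else J2) eps alpha x0 ee t i - J2\<bar>) \<le> ereal (delta / alpha)"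
proof -
  define x where "x = hk_traj V (\<lambda>i. if i \<in> S1 then J1 else J2) eps alpha x0 ee"
  define b where "b = ((1 - alpha) * eps + delta) / alpha"
  define c1 where "c1 = J1 - b"
  define c2 where "c2 = J2 + b"
  have e0: "0 \<le> eps" using eps by simp
  have b0: "0 \<le> b" unfolding b_def using alpha eps delta by simp
  have S1V: "S1 \<subseteq> V" and S2V: "S2 \<subseteq> V" using part by auto
  have rec: "\<And>t i. x (Suc t) i = clip01 ((1 - alpha) * hk_avg V eps (x t) i
      + alpha * (if i \<in> S1 then J1 else J2) + ee i (Suc t))"
    by (simp add: x_def)
  have rng: "\<And>t j. j \<in> V \<Longrightarrow> x t j \<in> {0..1}"
  proof -
    fix t j assume "j \<in> V"
    then show "x t j \<in> {0..1}"
    proof (cases t)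
      case 0 then show ?thesis using init[OF \<open>j \<in> V\<close>] by (simp add: x_def)
    next
      case (Suc t') show ?thesis unfolding x_def Suc hk_traj.simps(2) by (rule clip01_range)
    qed
  qed
  have ac1: "alpha * c1 = alpha * J1 - (1 - alpha) * eps - delta"
    unfolding c1_def b_def using alpha by (simp add: field_simps)
  have ac2: "alpha * c2 = alpha * J2 + (1 - alpha) * eps + delta"
    unfolding c2_def b_def using alpha by (simp add: field_simps)
  have low: "x t i \<ge> c1 - (1 - alpha) ^ t" if iS: "i \<in> S1" for t i
  proof (induction t)
    case 0
    then show ?case using init[of i] iS S1V J b0 by (auto simp: x_def c1_def)
  next
    case (Suc t)
    have iV: "i \<in> V" using iS S1V by blast
    have av: "x t i - eps \<le> hk_avg V eps (x t) i" using avg_near[OF fin iV e0] by blast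
    have xr: "x t i \<in> {0..1}" using rng iV by blast
    have m1: "(1 - alpha) * (x t i - eps) \<le> (1 - alpha) * hk_avg V eps (x t) i"
      using av alpha by (intro mult_left_mono) auto
    have lb: "(1 - alpha) * x t i + alpha * c1 \<le> (1 - alpha) * hk_avg V eps (x t) i
      + alpha * J1 + ee i (Suc t)"
      using m1 ac1 eb[OF iV, of t] by (simp add: algebra_simps abs_le_iff)
    have le1: "(1 - alpha) * x t i + alpha * c1 \<le> 1"
    proof -
      have "(1 - alpha) * x t i \<le> (1 - alpha) * 1" using xr alpha by (intro mult_left_mono) auto
      moreover have "alpha * c1 \<le> alpha * 1" using J alpha b0 unfolding c1_def
        by (intro mult_left_mono) auto
      ultimately show ?thesis by simp
    qed
    have "(1 - alpha) * x t i + alpha * c1 \<le> x (Suc t) i"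
      using rec[of t i] iS clip01_ge[OF le1 lb] by simp
    moreover have "(1 - alpha) * (c1 - (1 - alpha) ^ t) \<le> (1 - alpha) * x t i"
      using Suc.IH alpha by (intro mult_left_mono) auto
    ultimately show ?case by (simp add: algebra_simps)
  qed
  have up: "x t i \<le> c2 + (1 - alpha) ^ t" if iS: "i \<in> S2" for t i
  proof (induction t)
    case 0
    then show ?case using init[of i] iS S2V J b0 by (auto simp: x_def c2_def)
  next
    case (Suc t)
    have iV: "i \<in> V" using iS S2V by blast
    have iS1: "i \<notin> S1" using iS part by blast
    have av: "hk_avg V eps (x t) i \<le> x t i + eps" using avg_near[OF fin iV e0] by blast
    have xr: "x t i \<in> {0..1}" using rng iV by blast
    have m1: "(1 - alpha) * hk_avg V eps (x t) i \<le> (1 - alpha) * (x t i + eps)"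
      using av alpha by (intro mult_left_mono) auto
    have ub: "(1 - alpha) * hk_avg V eps (x t) i + alpha * J2 + ee i (Suc t)
       \<le> (1 - alpha) * x t i + alpha * c2"
      using m1 ac2 eb[OF iV, of t] by (simp add: algebra_simps abs_le_iff)
    have ge0: "0 \<le> (1 - alpha) * x t i + alpha * c2"
      using xr alpha J b0 unfolding c2_def by simp
    have "x (Suc t) i \<le> (1 - alpha) * x t i + alpha * c2"
      using rec[of t i] iS1 clip01_le[OF ge0 ub] by simp
    moreover have "(1 - alpha) * x t i \<le> (1 - alpha) * (c2 + (1 - alpha) ^ t)"
      using Suc.IH alpha by (intro mult_left_mono) auto
    ultimately show ?case by (simp add: algebra_simps)
  qed
  define g where "g = c1 - c2 - eps"
  have g0: "g > 0" using gap unfolding g_def c1_def c2_def b_def by (simp add: field_simps)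
  have "(\<lambda>t. (1 - alpha) ^ t) \<longlonglongrightarrow> 0"
    using alpha by (intro LIMSEQ_power_zero) simp
  then have "eventually (\<lambda>t. (1 - alpha) ^ t < g / 2) sequentially"
    using g0 by (intro order_tendstoD) auto
  then obtain T where T: "\<And>t. t \<ge> T \<Longrightarrow> (1 - alpha) ^ t < g / 2"
    unfolding eventually_sequentially by blast
  have sep: "x t i - x t j > eps" if "t \<ge> T" "i \<in> S1" "j \<in> S2" for t i j
    using low[OF that(2), of t] up[OF that(3), of t] T[OF that(1)] unfolding g_def by simp
  have nb1: "j \<in> S1" if "t \<ge> T" "i \<in> S1" "j \<in> hk_neighbors V eps (x t) i" for t i j
  proof (rule ccontr)
    assume "j \<notin> S1"
    then have "j \<in> S2" using that(3) part by (auto simp: hk_neighbors_def)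
    then have "eps < x t i - x t j" using sep[OF that(1,2)] by blast
    then show False using that(3) by (auto simp: hk_neighbors_def)
  qed
  have nb2: "j \<in> S2" if "t \<ge> T" "i \<in> S2" "j \<in> hk_neighbors V eps (x t) i" for t i j
  proof (rule ccontr)
    assume "j \<notin> S2"
    then have "j \<in> S1" using that(3) part by (auto simp: hk_neighbors_def)
    then have "eps < x t j - x t i" using sep[OF that(1) _ that(2)] by blast
    then show False using that(3) by (auto simp: hk_neighbors_def)
  qed
  have p1: "\<forall>i\<in>S1. \<bar>x (T + k) i - J1\<bar> \<le> (1 - alpha) ^ k + delta / alpha" for k
    by (rule phase2[OF fin S1V _ _ alpha _ e0 _ _ rng nb1]) (use J delta eb S1V rec in auto)
  have p2: "\<forall>i\<in>S2. \<bar>x (T + k) i - J2\<bar> \<le> (1 - alpha) ^ k + delta / alpha" for k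
  proof (rule phase2[OF fin S2V _ _ alpha _ e0 _ _ rng nb2])
    fix t i assume "i \<in> S2"
    then have "i \<notin> S1" using part by blast
    then show "x (Suc t) i = clip01 ((1 - alpha) * hk_avg V eps (x t) i + alpha * J2 + ee i (Suc t))"
      using rec by simp
  qed (use J delta eb S2V in auto)
  have q1: "\<bar>x t i - J1\<bar> \<le> (1 - alpha) ^ (t - T) + delta / alpha" if "t \<ge> T" "i \<in> S1" for t i
    using p1[of "t - T"] that by simp
  have q2: "\<bar>x t i - J2\<bar> \<le> (1 - alpha) ^ (t - T) + delta / alpha" if "t \<ge> T" "i \<in> S2" for t i
    using p2[of "t - T"] that by simp
  show ?thesis
    using limsup_bound[OF alpha, of T S1 "\<lambda>t i. x t i - J1" delta] q1
      limsup_bound[OF alpha, of T S2 "\<lambda>t i. x t i - J2" delta] q2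
    unfolding x_def by blast
qed
theorem theorem3:
  fixes M :: "'a measure" and xi :: "nat \<Rightarrow> nat \<Rightarrow> 'a \<Rightarrow> real"
    and n :: nat and S1 S2 :: "nat set" and J1 J2 eps alpha delta :: real
    and x0 :: "nat \<Rightarrow> real"
  assumes P: "prob_space M"
    and n: "n \<ge> 1"
    and part: "S1 \<union> S2 = {1..n}" "S1 \<inter> S2 = {}"
    and J: "J1 \<in> {0..1}" "J2 \<in> {0..1}"
    and eps: "0 < eps" "eps < 1"
    and alpha: "0 < alpha" "alpha \<le> 1"
    and meas: "\<And>i t. i \<in> {1..n} \<Longrightarrow> t \<ge> 1 \<Longrightarrow> xi i t \<in> borel_measurable M"
    and indep: "prob_space.indep_vars M (\<lambda>_. borel) (\<lambda>(i, t). xi i t) ({1..n} \<times> {1..})"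
    and ident: "\<And>i t. i \<in> {1..n} \<Longrightarrow> t \<ge> 1 \<Longrightarrow> distr M borel (xi i t) = distr M borel (xi 1 1)"
    and integ: "integrable M (xi 1 1)"
    and mean0: "prob_space.expectation M (xi 1 1) = 0"
    and var_pos: "prob_space.expectation M (\<lambda>\<omega>. (xi 1 1 \<omega>)\<^sup>2) > 0"
    and delta: "delta > 0"
    and bound: "AE \<omega> in M. \<bar>xi 1 1 \<omega>\<bar> \<le> delta"
    and gap: "J1 - J2 > eps + 2 * (((1 - alpha) * eps + delta) / alpha)"
    and init: "\<And>i. i \<in> {1..n} \<Longrightarrow> x0 i \<in> {0..1}"
  shows "AE \<omega> in M.
     limsup (\<lambda>t. SUP i\<in>S1. ereal \<bar>hk_traj {1..n} (\<lambda>i. if i \<in> S1 then J1 else J2) eps alpha x0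
                                     (\<lambda>i t. xi i t \<omega>) t i - J1\<bar>) \<le> ereal (delta / alpha)
   \<and> limsup (\<lambda>t. SUP i\<in>S2. ereal \<bar>hk_traj {1..n} (\<lambda>i. if i \<in> S1 then J1 else J2) eps alpha x0
                                     (\<lambda>i t. xi i t \<omega>) t i - J2\<bar>) \<le> ereal (delta / alpha)"
proof -
  interpret prob_space M by (rule P)
  have m11: "xi 1 1 \<in> borel_measurable M" using meas[of 1 1] n by simp
  have d11: "AE y in distr M borel (xi 1 1). \<bar>y\<bar> \<le> delta"
    by (subst AE_distr_iff[OF m11]) (use bound in simp_all)
  have each: "AE \<omega> in M. i \<in> {1..n} \<longrightarrow> \<bar>xi i (Suc t) \<omega>\<bar> \<le> delta" for i t
  proof (cases "i \<in> {1..n}")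
    case True
    have mi: "xi i (Suc t) \<in> borel_measurable M" using meas[OF True] by simp
    have "AE y in distr M borel (xi i (Suc t)). \<bar>y\<bar> \<le> delta"
    proof -
      have eq: "distr M borel (xi i (Suc t)) = distr M borel (xi 1 1)"
        by (rule ident[OF True]) simp
      show ?thesis using d11 by (simp only: eq)
    qed
    then have "AE \<omega> in M. \<bar>xi i (Suc t) \<omega>\<bar> \<le> delta"
      by (subst (asm) AE_distr_iff[OF mi]) simp_all
    then show ?thesis by (rule AE_mp) simp
  next
    case False
    then show ?thesis by (intro AE_I2) auto
  qed
  have all: "AE \<omega> in M. \<forall>i. \<forall>t. i \<in> {1..n} \<longrightarrow> \<bar>xi i (Suc t) \<omega>\<bar> \<le> delta"
    using each by (simp add: AE_all_countable)
  show ?thesis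
  proof (rule AE_mp[OF all], intro AE_I2 impI)
    fix \<omega> assume h: "\<forall>i. \<forall>t. i \<in> {1..n} \<longrightarrow> \<bar>xi i (Suc t) \<omega>\<bar> \<le> delta"
    show "limsup (\<lambda>t. SUP i\<in>S1. ereal \<bar>hk_traj {1..n} (\<lambda>i. if i \<in> S1 then J1 else J2) eps alpha x0
                                     (\<lambda>i t. xi i t \<omega>) t i - J1\<bar>) \<le> ereal (delta / alpha)
   \<and> limsup (\<lambda>t. SUP i\<in>S2. ereal \<bar>hk_traj {1..n} (\<lambda>i. if i \<in> S1 then J1 else J2) eps alpha x0
                                     (\<lambda>i t. xi i t \<omega>) t i - J2\<bar>) \<le> ereal (delta / alpha)"
      by (rule det[OF _ part J eps(1) alpha delta gap init]) (use h in auto)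
  qed
qed

end
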